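(* Let $t\in(1/2,1)$ and let $f(z)=z+\sum_{n=2}^{\infty}a_nz^n$ be a bi-univalent function in the open unit disk $\mathbb{U}$ such that, with $g$ denoting the univalent extension to $\mathbb{U}$ of $f^{-1}$, $$f'(z)\prec \frac{1}{1-2tz+z^2}\quad(z\in\mathbb{U}),\qquad g'(w)\prec\frac{1}{1-2tw+w^2}\quad(w\in\mathbb{U}).$$ Then $|a_3-a_2^2|\le \dfrac{4t}{3}$.
   Context: A function $f(z)=z+\sum_{n\ge2}a_nz^n$ analytic in $\mathbb{U}=\{|z|<1\}$ is bi-univalent if $f$ is univalent in $\mathbb{U}$ and its inverse $f^{-1}$ extends to a univalent function $g$ on $\mathbb{U}$. For analytic $F,G$ on $\mathbb{U}$, $F\prec G$ means there is an analytic $w$ on $\mathbb{U}$ with $w(0)=0$, $|w(z)|<1$ and $F=G\circ w$. The function $\frac{1}{1-2tz+z^2}$ is the generating function of the Chebyshev polynomials of the second kind, i.e. the Horadam generating function $\frac{a+(b-ap)tz}{1-ptz-qz^2}$ with $a=1$, $b=p=2$, $q=-1$ (so the class condition $f'(z)\prec\Omega(t,z)+1-a$ becomes the one above). *)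

theory Defs
  imports "HOL-Complex_Analysis.Complex_Analysis"
begin

definition subordinate :: "(complex \<Rightarrow> complex) \<Rightarrow> (complex \<Rightarrow> complex) \<Rightarrow> bool" where
  "subordinate F G \<longleftrightarrow>
     (\<exists>w. w holomorphic_on ball 0 1 \<and> w 0 = 0 \<and> (\<forall>z\<in>ball 0 1. norm (w z) < 1) \<and>
          (\<forall>z\<in>ball 0 1. F z = G (w z)))"

definition normalized_univalent :: "(complex \<Rightarrow> complex) \<Rightarrow> bool" where
  "normalized_univalent f \<longleftrightarrow>
     f holomorphic_on ball 0 1 \<and> inj_on f (ball 0 1) \<and> f 0 = 0 \<and> deriv f 0 = 1"

definition inverse_extension :: "(complex \<Rightarrow> complex) \<Rightarrow> (complex \<Rightarrow> complex) \<Rightarrow> bool" where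
  "inverse_extension f g \<longleftrightarrow>
     g holomorphic_on ball 0 1 \<and> inj_on g (ball 0 1) \<and>
     (\<forall>z\<in>ball 0 1. f z \<in> ball 0 1 \<longrightarrow> g (f z) = z)"

definition taylor_coeff :: "(complex \<Rightarrow> complex) \<Rightarrow> nat \<Rightarrow> complex" where
  "taylor_coeff f n = (deriv ^^ n) f 0 / of_nat (fact n)"

definition cheb_gen :: "real \<Rightarrow> complex \<Rightarrow> complex" where
  "cheb_gen t z = 1 / (1 - 2 * complex_of_real t * z + z^2)"

end

theory Submission
  imports Defs
begin

lemma p_nonzero:
  fixes t :: real and z :: complex
  assumes "-1 < t" "t < 1" "norm z < 1"
  shows "1 - 2 * of_real t * z + z^2 \<noteq> 0"
proof
  assume h: "1 - 2 * of_real t * z + z^2 = 0"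
  define x where "x = Re z"
  define y where "y = Im z"
  have re: "1 - 2*t*x + x^2 - y^2 = 0"
    using arg_cong[OF h, of Re] by (simp add: x_def y_def power2_eq_square)
  have im: "y * (x - t) = 0"
    using arg_cong[OF h, of Im] by (simp add: x_def y_def power2_eq_square algebra_simps)
  have n: "x^2 + y^2 < 1"
    using assms(3) by (simp add: x_def y_def norm_complex_def)
  from im have "y = 0 \<or> x = t" by auto
  then show False
  proof
    assume "y = 0"
    then have "(x - t)^2 + (1 - t^2) = 0" using re by (simp add: power2_eq_square algebra_simps)
    moreover have "t^2 < 1" using assms by (simp add: abs_square_less_1)
    ultimately show False by (smt (verit) zero_le_power2)
  next
    assume "x = t"
    then have "x^2 + y^2 = 1" using re by (simp add: power2_eq_square algebra_simps)
    then show False using n by simp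
  qed
qed


lemma cheb_coeffs:
  fixes t :: real and F u :: "complex \<Rightarrow> complex"
  assumes t: "-1 < t" "t < 1"
    and holF: "F holomorphic_on ball 0 1" and holu: "u holomorphic_on ball 0 1"
    and u0: "u 0 = 0" and ub: "\<forall>z\<in>ball 0 1. norm (u z) < 1"
    and eq: "\<forall>z\<in>ball 0 1. F z = cheb_gen t (u z)"
  shows "F 0 = 1" "deriv F 0 = 2 * of_real t * deriv u 0"
    "deriv (deriv F) 0 = (8 * (of_real t)^2 - 2) * (deriv u 0)^2 + 2 * of_real t * deriv (deriv u) 0"
proof -
  define T where "T = (of_real t :: complex)"
  define p where "p w = 1 - 2 * T * w + w^2" for w
  define Hd where "Hd w = - (2 * w - 2 * T) / (p w * p w)" for w
  have pnz: "p w \<noteq> 0" if "norm w < 1" for w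
    using p_nonzero[OF t that] by (simp add: p_def T_def)
  have dp: "(p has_field_derivative (2 * w - 2 * T)) (at w)" for w
    unfolding p_def by (rule derivative_eq_intros refl | simp)+
  have H': "(cheb_gen t has_field_derivative Hd w) (at w)" if "norm w < 1" for w
  proof -
    have "((\<lambda>w. inverse (p w)) has_field_derivative - ((2 * w - 2 * T) * inverse (p w * p w))) (at w)"
      using DERIV_inverse_fun[OF dp pnz[OF that]] by simp
    moreover have "cheb_gen t = (\<lambda>w. inverse (p w))"
      by (auto simp: cheb_gen_def p_def T_def divide_inverse)
    moreover have "- ((2 * w - 2 * T) * inverse (p w * p w)) = Hd w"
      by (simp add: Hd_def divide_inverse algebra_simps)
    ultimately show ?thesis by metis
  qed
  have dp2: "((\<lambda>w. p w * p w) has_field_derivative (2 * 0 - 2 * T) * p 0 + p 0 * (2 * 0 - 2 * T)) (at 0)"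
    using DERIV_mult[OF dp[of 0] dp[of 0]] by (simp add: algebra_simps)
  have dq: "((\<lambda>w. - (2 * w - 2 * T)) has_field_derivative -2) (at 0)"
    by (rule derivative_eq_intros refl | simp)+
  have p0: "p 0 = 1" by (simp add: p_def)
  have Hd0: "(Hd has_field_derivative (8 * T^2 - 2)) (at 0)"
  proof -
    have "(Hd has_field_derivative ((-2) * (p 0 * p 0) - (- (2 * 0 - 2 * T)) * ((2 * 0 - 2 * T) * p 0 + p 0 * (2 * 0 - 2 * T))) / ((p 0 * p 0) * (p 0 * p 0))) (at 0)"
      unfolding Hd_def[abs_def] by (rule DERIV_divide[OF dq dp2]) (simp add: p0)
    then show ?thesis by (simp add: p0 power2_eq_square algebra_simps)
  qed
  show F0: "F 0 = 1" using eq by (simp add: cheb_gen_def u0)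
  have dF: "deriv F z = Hd (u z) * deriv u z" if z: "z \<in> ball 0 1" for z
  proof -
    have "((\<lambda>z. cheb_gen t (u z)) has_field_derivative Hd (u z) * deriv u z) (at z)"
      using DERIV_chain2[OF H'[of "u z"] holomorphic_derivI[OF holu open_ball z]] ub z by simp
    then have "(F has_field_derivative Hd (u z) * deriv u z) (at z)"
      by (rule has_field_derivative_transform_within_open[OF _ open_ball z]) (use eq in auto)
    then show ?thesis by (rule DERIV_imp_deriv)
  qed
  show "deriv F 0 = 2 * of_real t * deriv u 0"
    using dF[of 0] by (simp add: Hd_def u0 p0 T_def)
  have "((\<lambda>z. Hd (u z) * deriv u z) has_field_derivative
      (8 * T^2 - 2) * deriv u 0 * deriv u 0 + Hd (u 0) * deriv (deriv u) 0) (at 0)"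
  proof -
    have c: "((\<lambda>z. Hd (u z)) has_field_derivative (8 * T^2 - 2) * deriv u 0) (at 0)"
      using DERIV_chain2[of Hd, OF _ holomorphic_derivI[OF holu open_ball]] Hd0 u0 by simp
    have d: "(deriv u has_field_derivative deriv (deriv u) 0) (at 0)"
      by (rule holomorphic_derivI[OF holomorphic_deriv[OF holu open_ball] open_ball]) simp
    show ?thesis using DERIV_mult[OF c d] by (simp add: algebra_simps)
  qed
  then have "(deriv F has_field_derivative
      (8 * T^2 - 2) * deriv u 0 * deriv u 0 + Hd (u 0) * deriv (deriv u) 0) (at 0)"
    by (rule has_field_derivative_transform_within_open[OF _ open_ball[of 0 1]]) (use dF in auto)
  then show "deriv (deriv F) 0 = (8 * (of_real t)^2 - 2) * (deriv u 0)^2 + 2 * of_real t * deriv (deriv u) 0"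
    by (auto dest!: DERIV_imp_deriv simp: Hd_def u0 p0 T_def power2_eq_square)
qed


lemma const_deriv_zero:
  assumes "(h has_field_derivative D) (at x)" "open S" "x \<in> S" "\<forall>y\<in>S. h y = c"
  shows "D = 0"
proof -
  have "((\<lambda>y. c) has_field_derivative 0) (at x)" by simp
  then have "(h has_field_derivative 0) (at x)"
    by (rule has_field_derivative_transform_within_open[OF _ assms(2,3)]) (use assms(4) in auto)
  then show ?thesis using assms(1) DERIV_unique by blast
qed

lemma inverse_derivs:
  fixes f g :: "complex \<Rightarrow> complex"
  assumes holf: "f holomorphic_on ball 0 1" and f0: "f 0 = 0"
    and holg: "g holomorphic_on ball 0 1"
    and inv: "\<forall>z\<in>ball 0 1. f z \<in> ball 0 1 \<longrightarrow> g (f z) = z"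
  shows "deriv g 0 * deriv f 0 = 1"
    "deriv (deriv g) 0 * deriv f 0 * deriv f 0 + deriv g 0 * deriv (deriv f) 0 = 0"
    "deriv (deriv (deriv g)) 0 * (deriv f 0)^3 + 3 * deriv (deriv g) 0 * deriv f 0 * deriv (deriv f) 0
       + deriv g 0 * deriv (deriv (deriv f)) 0 = 0"
proof -
  define F where "F = deriv f"
  define F1 where "F1 = deriv F"
  define F2 where "F2 = deriv F1"
  define G where "G = deriv g"
  define G1 where "G1 = deriv G"
  define G2 where "G2 = deriv G1"
  have hF: "F holomorphic_on ball 0 1" unfolding F_def by (rule holomorphic_deriv[OF holf open_ball])
  have hF1: "F1 holomorphic_on ball 0 1" unfolding F1_def by (rule holomorphic_deriv[OF hF open_ball])
  have hG: "G holomorphic_on ball 0 1" unfolding G_def by (rule holomorphic_deriv[OF holg open_ball])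
  have hG1: "G1 holomorphic_on ball 0 1" unfolding G1_def by (rule holomorphic_deriv[OF hG open_ball])
  define B where "B = ball 0 1 \<inter> f -` ball 0 1"
  have oB: "open B" unfolding B_def
    by (rule continuous_open_preimage[OF holomorphic_on_imp_continuous_on[OF holf] open_ball open_ball])
  have B0: "0 \<in> B" by (simp add: B_def f0)
  have Bs: "z \<in> ball 0 1" "f z \<in> ball 0 1" if "z \<in> B" for z using that by (auto simp: B_def)
  have df: "(f has_field_derivative F z) (at z)" if "z \<in> B" for z
    unfolding F_def by (rule holomorphic_derivI[OF holf open_ball Bs(1)[OF that]])
  have dF: "(F has_field_derivative F1 z) (at z)" if "z \<in> B" for z
    unfolding F1_def by (rule holomorphic_derivI[OF hF open_ball Bs(1)[OF that]])
  have dF1: "(F1 has_field_derivative F2 z) (at z)" if "z \<in> B" for z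
    unfolding F2_def by (rule holomorphic_derivI[OF hF1 open_ball Bs(1)[OF that]])
  have dg: "((\<lambda>z. g (f z)) has_field_derivative G (f z) * F z) (at z)" if "z \<in> B" for z
    using DERIV_chain2[OF holomorphic_derivI[OF holg open_ball Bs(2)[OF that]] df[OF that]]
    by (simp add: G_def)
  have dG: "((\<lambda>z. G (f z)) has_field_derivative G1 (f z) * F z) (at z)" if "z \<in> B" for z
    using DERIV_chain2[OF holomorphic_derivI[OF hG open_ball Bs(2)[OF that]] df[OF that]]
    by (simp add: G1_def)
  have dG1: "((\<lambda>z. G1 (f z)) has_field_derivative G2 (f z) * F z) (at z)" if "z \<in> B" for z
    using DERIV_chain2[OF holomorphic_derivI[OF hG1 open_ball Bs(2)[OF that]] df[OF that]]
    by (simp add: G2_def)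
  have E0: "G (f z) * F z = 1" if "z \<in> B" for z
  proof -
    have "((\<lambda>z. g (f z) - z) has_field_derivative G (f z) * F z - 1) (at z)"
      using DERIV_diff[OF dg[OF that] DERIV_ident] by simp
    then have "G (f z) * F z - 1 = 0"
      by (rule const_deriv_zero[OF _ oB that, where c=0]) (use inv Bs in auto)
    then show ?thesis by simp
  qed
  have E1: "G1 (f z) * F z * F z + G (f z) * F1 z = 0" if "z \<in> B" for z
  proof -
    have "((\<lambda>z. G (f z) * F z) has_field_derivative G1 (f z) * F z * F z + F1 z * G (f z)) (at z)"
      using DERIV_mult[OF dG[OF that] dF[OF that]] by simp
    then have "G1 (f z) * F z * F z + F1 z * G (f z) = 0"
      by (rule const_deriv_zero[OF _ oB that, where c=1]) (use E0 in auto)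
    then show ?thesis by (simp add: algebra_simps)
  qed
  have "((\<lambda>z. G1 (f z) * F z * F z + G (f z) * F1 z) has_field_derivative
     (G2 (f 0) * F 0 * F 0 + F1 0 * G1 (f 0)) * F 0 + F1 0 * (G1 (f 0) * F 0)
     + (G1 (f 0) * F 0 * F1 0 + F2 0 * G (f 0))) (at 0)"
    by (intro DERIV_add DERIV_mult dG1 dF dG dF1 B0)
  then have E2: "(G2 (f 0) * F 0 * F 0 + F1 0 * G1 (f 0)) * F 0 + F1 0 * (G1 (f 0) * F 0)
     + (G1 (f 0) * F 0 * F1 0 + F2 0 * G (f 0)) = 0"
    by (rule const_deriv_zero[OF _ oB B0, where c=0]) (use E1 in auto)
  show "deriv g 0 * deriv f 0 = 1" using E0[OF B0] by (simp add: f0 G_def F_def)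
  show "deriv (deriv g) 0 * deriv f 0 * deriv f 0 + deriv g 0 * deriv (deriv f) 0 = 0"
    using E1[OF B0] by (simp add: f0 G_def F_def G1_def F1_def)
  show "deriv (deriv (deriv g)) 0 * (deriv f 0)^3 + 3 * deriv (deriv g) 0 * deriv f 0 * deriv (deriv f) 0
       + deriv g 0 * deriv (deriv (deriv f)) 0 = 0"
    using E2 unfolding f0 G_def F_def G1_def F1_def G2_def F2_def
    by (simp add: algebra_simps power3_eq_cube)
qed

lemma schwarz_coeff2:
  fixes u :: "complex \<Rightarrow> complex"
  assumes holu: "u holomorphic_on ball 0 1" and ub: "\<forall>z\<in>ball 0 1. norm (u z) < 1"
  shows "norm (deriv (deriv u) 0) \<le> 32/9"
proof -
  have "norm ((deriv ^^ 2) u 0) \<le> fact 2 * 1 / (3/4)^2"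
  proof (rule Cauchy_inequality)
    show "u holomorphic_on ball 0 (3/4)" by (rule holomorphic_on_subset[OF holu]) auto
    show "continuous_on (cball 0 (3/4)) u"
      by (rule continuous_on_subset[OF holomorphic_on_imp_continuous_on[OF holu]]) auto
    show "norm (u x) \<le> 1" if "norm (0 - x) = 3/4" for x
      using ub that by (simp add: less_imp_le)
  qed simp
  then show ?thesis by (simp add: numeral_2_eq_2)
qed


theorem corollary2p4:
  fixes t :: real and f g :: "complex \<Rightarrow> complex"
  assumes "1/2 < t" and "t < 1"
    and "normalized_univalent f"
    and "inverse_extension f g"
    and "subordinate (deriv f) (cheb_gen t)"
    and "subordinate (deriv g) (cheb_gen t)"
  shows "norm (taylor_coeff f 3 - (taylor_coeff f 2)^2) \<le> 4 * t / 3"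
proof -
  have t1: "-1 < t" using assms(1) by simp
  have holf: "f holomorphic_on ball 0 1" and f0: "f 0 = 0" and df0: "deriv f 0 = 1"
    using assms(3) by (auto simp: normalized_univalent_def)
  have holg: "g holomorphic_on ball 0 1" and inv: "\<forall>z\<in>ball 0 1. f z \<in> ball 0 1 \<longrightarrow> g (f z) = z"
    using assms(4) by (auto simp: inverse_extension_def)
  obtain u where holu: "u holomorphic_on ball 0 1" and u0: "u 0 = 0"
    and ub: "\<forall>z\<in>ball 0 1. norm (u z) < 1" and ueq: "\<forall>z\<in>ball 0 1. deriv f z = cheb_gen t (u z)"
    using assms(5) unfolding subordinate_def by blast
  obtain v where holv: "v holomorphic_on ball 0 1" and v0: "v 0 = 0"
    and vb: "\<forall>z\<in>ball 0 1. norm (v z) < 1" and veq: "\<forall>z\<in>ball 0 1. deriv g z = cheb_gen t (v z)"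
    using assms(6) unfolding subordinate_def by blast
  note cf = cheb_coeffs[OF t1 assms(2) holomorphic_deriv[OF holf open_ball] holu u0 ub ueq]
  note cg = cheb_coeffs[OF t1 assms(2) holomorphic_deriv[OF holg open_ball] holv v0 vb veq]
  note id = inverse_derivs[OF holf f0 holg inv]
  define T where "T = complex_of_real t"
  have T0: "T \<noteq> 0" using assms(1) by (simp add: T_def)
  define c1 where "c1 = deriv u 0"
  define c2 where "c2 = deriv (deriv u) 0"
  define d1 where "d1 = deriv v 0"
  define d2 where "d2 = deriv (deriv v) 0"
  define F1 where "F1 = deriv (deriv f) 0"
  define F2 where "F2 = deriv (deriv (deriv f)) 0"
  define G1 where "G1 = deriv (deriv g) 0"
  define G2 where "G2 = deriv (deriv (deriv g)) 0"
  have hF1: "F1 = 2 * T * c1" and hF2: "F2 = (8 * T^2 - 2) * c1^2 + 2 * T * c2"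
    using cf unfolding F1_def F2_def T_def c1_def c2_def by auto
  have hG0: "deriv g 0 = 1" using id(1) df0 by simp
  have hG1: "G1 = 2 * T * d1" and hG2: "G2 = (8 * T^2 - 2) * d1^2 + 2 * T * d2"
    using cg unfolding G1_def G2_def T_def d1_def d2_def by auto
  have e1: "G1 + F1 = 0" using id(2) df0 hG0 unfolding G1_def F1_def by simp
  have e2: "G2 + 3 * G1 * F1 + F2 = 0" using id(3) df0 hG0 unfolding G2_def G1_def F1_def F2_def by simp
  have "2 * (T * (d1 + c1)) = 0" using e1 hF1 hG1 by (simp add: algebra_simps)
  then have "T * (d1 + c1) = 0" by simp
  then have dc: "d1 = - c1" using T0 by (simp add: add_eq_0_iff)
  have tc2: "taylor_coeff f 2 = F1 / 2"
    by (simp add: taylor_coeff_def F1_def numeral_2_eq_2)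
  have tc3: "taylor_coeff f 3 = F2 / 6"
    by (simp add: taylor_coeff_def F2_def numeral_3_eq_3 numeral_2_eq_2)
  have g1: "G1 = - F1" using e1 by (simp add: eq_neg_iff_add_eq_0)
  have g2: "G2 = 3 * F1^2 - F2"
  proof -
    have "G2 = (G2 + 3 * G1 * F1 + F2) - 3 * G1 * F1 - F2" by simp
    also have "\<dots> = 3 * F1^2 - F2" using e2 g1 by (simp add: power2_eq_square)
    finally show ?thesis .
  qed
  have x1: "2 * T * c2 = F2 - (8 * T^2 - 2) * c1^2" using hF2 by simp
  have x2: "2 * T * d2 = 3 * F1^2 - F2 - (8 * T^2 - 2) * c1^2"
    using hG2 g2 dc by simp
  have "T * (c2 - d2) / 6 = (2 * T * c2 - 2 * T * d2) / 12" by (simp add: field_simps)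
  also have "\<dots> = (2 * F2 - 3 * F1^2) / 12" unfolding x1 x2 by (simp add: algebra_simps)
  also have "\<dots> = F2 / 6 - (F1 / 2)^2" by (simp add: power_divide diff_divide_distrib)
  finally have key: "taylor_coeff f 3 - (taylor_coeff f 2)^2 = T * (c2 - d2) / 6"
    unfolding tc2 tc3 by simp
  have nc2: "norm c2 \<le> 32/9" unfolding c2_def by (rule schwarz_coeff2[OF holu ub])
  have nd2: "norm d2 \<le> 32/9" unfolding d2_def by (rule schwarz_coeff2[OF holv vb])
  have "norm (c2 - d2) \<le> 64/9" using norm_triangle_ineq4[of c2 d2] nc2 nd2 by simp
  moreover have "norm T = t" using assms(1) by (simp add: T_def)
  ultimately have "norm (T * (c2 - d2) / 6) \<le> t * (64/9) / 6"
    using assms(1) by (simp add: norm_mult norm_divide mult_left_mono divide_right_mono)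
  also have "\<dots> \<le> 4 * t / 3" using assms(1) by simp
  finally show ?thesis unfolding key .
qed

end
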